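(* Let $\mu:\mathbb{N}\to\mathbb{R}$ with increments $\gamma(n)=\mu(n+1)-\mu(n)$ satisfying $\gamma(n)\ge0$ and $\gamma(n+1)\le\gamma(n)$ for all $n\in\mathbb{N}$. Let $T,N,h$ be integers with $N\ge2$, $N\le T-1$ and $1\le h\le\lfloor N/2\rfloor$, and define $$\widetilde\mu^T=\frac1h\sum_{l=N-h+1}^{N}\Big(\mu(l)+(T-l)\frac{\mu(l)-\mu(l-h)}{h}\Big).$$ Then $\widetilde\mu^T\ge\mu(T)$ and $$\widetilde\mu^T-\mu(T)\le\frac12(2T-2N+h-1)\,\gamma(N-2h+1).$$
   Context: In the paper $\mu$ is the expected-reward function of an arm (indexed by number of pulls), $N$ is the number of pulls of the arm before some round $t\le T$, and $h$ is the window width. *)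

theory Defs
  imports Complex_Main
begin

definition gamma_incr :: "(nat \<Rightarrow> real) \<Rightarrow> nat \<Rightarrow> real" where
  "gamma_incr \<mu> n = \<mu> (n + 1) - \<mu> n"

definition mu_tilde :: "(nat \<Rightarrow> real) \<Rightarrow> nat \<Rightarrow> nat \<Rightarrow> nat \<Rightarrow> real" where
  "mu_tilde \<mu> T N h =
     (1 / real h) * (\<Sum>l = N - h + 1..N.
        \<mu> l + (real T - real l) * ((\<mu> l - \<mu> (l - h)) / real h))"

end

theory Submission
  imports Defs
begin

lemma gam_anti:
  assumes "\<And>n. gamma_incr \<mu> (n + 1) \<le> gamma_incr \<mu> n" and "m \<le> n"
  shows "gamma_incr \<mu> n \<le> gamma_incr \<mu> m"
  using assms(2)
proof (induction n)
  case 0 then show ?case by simp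
next
  case (Suc n)
  show ?case
  proof (cases "m = Suc n")
    case False
    then have "m \<le> n" using Suc by simp
    then show ?thesis using Suc.IH assms(1)[of n] by simp
  qed simp
qed

lemma mu_tele:
  assumes "a \<le> b"
  shows "\<mu> b - \<mu> a = (\<Sum>k=a..<b. gamma_incr \<mu> k)"
  using assms
proof (induction b)
  case 0 then show ?case by simp
next
  case (Suc b)
  show ?case
  proof (cases "a = Suc b")
    case False
    then have "a \<le> b" using Suc by simp
    then show ?thesis using Suc.IH by (simp add: gamma_incr_def)
  qed simp
qed

lemma gsum: "(\<Sum>i<h. real i) = real h * (real h - 1) / 2"
  by (induction h) (auto simp: field_simps)

lemma sumTl:
  assumes "h \<le> N"
  shows "(\<Sum>l = N - h + 1..N. (real T - real l)) = real h * (2 * real T - 2 * real N + real h - 1) / 2"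
proof -
  have "(\<Sum>l = N - h + 1..N. (real T - real l)) = (\<Sum>i<h. (real T - real (N - i)))"
    by (rule sum.reindex_bij_witness[of _ "\<lambda>l. N - l" "\<lambda>i. N - i"]) (use assms in auto)
  also have "\<dots> = (\<Sum>i<h. (real T - real N + real i))"
    by (rule sum.cong) (use assms in auto)
  also have "\<dots> = real h * (real T - real N) + (\<Sum>i<h. real i)"
    by (simp add: sum.distrib)
  finally show ?thesis by (simp add: gsum field_simps)
qed

theorem lemma5:
  fixes \<mu> :: "nat \<Rightarrow> real" and T N h :: nat
  assumes "\<And>n. gamma_incr \<mu> n \<ge> 0"
    and "\<And>n. gamma_incr \<mu> (n + 1) \<le> gamma_incr \<mu> n"
    and "N \<ge> 2" and "N + 1 \<le> T"
    and "1 \<le> h" and "h \<le> N div 2"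
  shows "mu_tilde \<mu> T N h \<ge> \<mu> T \<and>
         mu_tilde \<mu> T N h - \<mu> T
           \<le> (1/2) * (2 * real T - 2 * real N + real h - 1) * gamma_incr \<mu> (N - 2 * h + 1)"
proof -
  let ?g = "gamma_incr \<mu>"
  let ?t = "\<lambda>l. \<mu> l + (real T - real l) * ((\<mu> l - \<mu> (l - h)) / real h)"
  let ?G = "?g (N - 2 * h + 1)"
  have hpos: "real h > 0" using assms by simp
  have per: "\<mu> T \<le> ?t l \<and> ?t l - \<mu> T \<le> (real T - real l) * ?G"
    if l: "l \<in> {N - h + 1..N}" for l
  proof -
    from l assms have lh: "h + 1 \<le> l" "l < T" "N - 2 * h + 1 \<le> l - h" by auto
    have d1: "\<mu> T - \<mu> l = (\<Sum>k=l..<T. ?g k)" using lh by (intro mu_tele) simp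
    have d2: "\<mu> l - \<mu> (l - h) = (\<Sum>k=l-h..<l. ?g k)" by (intro mu_tele) simp
    have "(\<Sum>k=l..<T. ?g k) \<le> (\<Sum>k=l..<T. ?g l)"
      by (rule sum_mono) (auto intro: gam_anti[OF assms(2)])
    then have a1: "\<mu> T - \<mu> l \<le> (real T - real l) * ?g l" using d1 lh by simp
    have "(\<Sum>k=l-h..<l. ?g l) \<le> (\<Sum>k=l-h..<l. ?g k)"
      by (rule sum_mono) (auto intro: gam_anti[OF assms(2)])
    then have a2: "real h * ?g l \<le> \<mu> l - \<mu> (l - h)" using d2 lh by simp
    have "(\<Sum>k=l-h..<l. ?g k) \<le> (\<Sum>k=l-h..<l. ?g (l - h))"
      by (rule sum_mono) (auto intro: gam_anti[OF assms(2)])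
    then have a3: "\<mu> l - \<mu> (l - h) \<le> real h * ?g (l - h)" using d2 lh by simp
    have a4: "?g (l - h) \<le> ?G" using lh by (intro gam_anti[OF assms(2)]) simp
    have a5: "0 \<le> \<mu> T - \<mu> l" using d1 assms(1) by (simp add: sum_nonneg)
    have Tl: "real T - real l \<ge> 0" using lh by simp
    have s1: "?g l \<le> (\<mu> l - \<mu> (l - h)) / real h" using a2 hpos by (simp add: field_simps)
    have "real h * ?g (l - h) \<le> real h * ?G" using a4 hpos by simp
    then have "\<mu> l - \<mu> (l - h) \<le> real h * ?G" using a3 by linarith
    then have s2: "(\<mu> l - \<mu> (l - h)) / real h \<le> ?G" using hpos by (metis pos_divide_le_eq mult.commute)
    have "(real T - real l) * ?g l \<le> (real T - real l) * ((\<mu> l - \<mu> (l - h)) / real h)"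
      using s1 Tl by (rule mult_left_mono)
    moreover have "(real T - real l) * ((\<mu> l - \<mu> (l - h)) / real h) \<le> (real T - real l) * ?G"
      using s2 Tl by (rule mult_left_mono)
    ultimately show ?thesis using a1 a5 by linarith
  qed
  have cardI: "card {N - h + 1..N} = h" using assms by simp
  have S1: "real h * \<mu> T \<le> (\<Sum>l = N - h + 1..N. ?t l)"
  proof -
    have "(\<Sum>l = N - h + 1..N. \<mu> T) \<le> (\<Sum>l = N - h + 1..N. ?t l)"
      using per by (intro sum_mono) blast
    then show ?thesis using cardI by simp
  qed
  have S2: "(\<Sum>l = N - h + 1..N. ?t l) - real h * \<mu> T \<le> real h * (2 * real T - 2 * real N + real h - 1) / 2 * ?G"
  proof -
    have "(\<Sum>l = N - h + 1..N. ?t l - \<mu> T) \<le> (\<Sum>l = N - h + 1..N. (real T - real l) * ?G)"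
      using per by (intro sum_mono) blast
    also have "\<dots> = (\<Sum>l = N - h + 1..N. (real T - real l)) * ?G" by (simp add: sum_distrib_right)
    also have "\<dots> = real h * (2 * real T - 2 * real N + real h - 1) / 2 * ?G"
      using assms by (subst sumTl) auto
    finally show ?thesis using cardI by (simp add: sum_subtractf)
  qed
  have mt: "mu_tilde \<mu> T N h = (\<Sum>l = N - h + 1..N. ?t l) / real h"
    by (simp add: mu_tilde_def)
  define S where "S = (\<Sum>l = N - h + 1..N. ?t l)"
  define C where "C = (2 * real T - 2 * real N + real h - 1) * ?G"
  have mt': "mu_tilde \<mu> T N h = S / real h" using mt S_def by simp
  have S2': "S - real h * \<mu> T \<le> real h * C / 2" using S2 unfolding S_def C_def by (simp add: mult.assoc)
  have A: "\<mu> T \<le> S / real h" using S1 hpos unfolding S_def by (metis pos_le_divide_eq mult.commute)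
  have B: "S / real h - \<mu> T \<le> C / 2"
  proof -
    have "S \<le> real h * (C / 2 + \<mu> T)" using S2' by (simp add: algebra_simps)
    then have "S / real h \<le> C / 2 + \<mu> T" using hpos by (metis pos_divide_le_eq mult.commute)
    then show ?thesis by linarith
  qed
  show ?thesis using A B unfolding mt' C_def by simp
qed

end
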